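(* Let $\xi_m>0$, $0\le\mu\le\xi_m$ and $T>0$, and let $$f(u)=2T\ln\frac{\cosh(\sqrt{\xi_m^2+u^2}/2T)}{\cosh(\sqrt{\mu^2+u^2}/2T)}+\mu\int_0^{\mu}\tanh\Big(\frac{\sqrt{\xi^2+u^2}}{2T}\Big)\frac{d\xi}{\sqrt{\xi^2+u^2}},\quad u>0.$$ Then $u\mapsto u f(u)$ is strictly increasing on $(0,\infty)$. *)

theory Defs
  imports "HOL-Analysis.Analysis"
begin

definition gap_f :: "real \<Rightarrow> real \<Rightarrow> real \<Rightarrow> real \<Rightarrow> real" where
  "gap_f \<xi>m \<mu> T u =
     2 * T * ln (cosh (sqrt (\<xi>m\<^sup>2 + u\<^sup>2) / (2 * T)) / cosh (sqrt (\<mu>\<^sup>2 + u\<^sup>2) / (2 * T)))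
     + \<mu> * integral {0..\<mu>} (\<lambda>\<xi>. tanh (sqrt (\<xi>\<^sup>2 + u\<^sup>2) / (2 * T)) / sqrt (\<xi>\<^sup>2 + u\<^sup>2))"

end

theory Submission
  imports Defs
begin

definition phi :: "real \<Rightarrow> real \<Rightarrow> real \<Rightarrow> real" where
  "phi T u \<xi> = u * tanh (sqrt (\<xi>\<^sup>2 + u\<^sup>2) / (2 * T)) / sqrt (\<xi>\<^sup>2 + u\<^sup>2)"

lemma phi_mono:
  assumes "0 < u" "u < v" "T > 0"
  shows "phi T u \<xi> < phi T v \<xi>"
proof -
  define Eu where "Eu = sqrt (\<xi>\<^sup>2 + u\<^sup>2)"
  define Ev where "Ev = sqrt (\<xi>\<^sup>2 + v\<^sup>2)"
  have Eu0: "Eu > 0" unfolding Eu_def using assms by (simp add: add_nonneg_pos)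
  have Ev0: "Ev > 0" unfolding Ev_def using assms by (simp add: add_nonneg_pos)
  have "u\<^sup>2 < v\<^sup>2" using assms by (simp add: power_strict_mono)
  hence "Eu < Ev" unfolding Eu_def Ev_def by simp
  hence t: "tanh (Eu / (2*T)) < tanh (Ev / (2*T))" using assms by (simp add: divide_strict_right_mono)
  have t0: "tanh (Eu / (2*T)) > 0" using Eu0 assms by simp
  have "u\<^sup>2 * \<xi>\<^sup>2 \<le> v\<^sup>2 * \<xi>\<^sup>2" using \<open>u\<^sup>2 < v\<^sup>2\<close> by (simp add: mult_right_mono)
  hence "u\<^sup>2 * Ev\<^sup>2 \<le> v\<^sup>2 * Eu\<^sup>2" unfolding Eu_def Ev_def by (simp add: algebra_simps)
  hence "(u * Ev)\<^sup>2 \<le> (v * Eu)\<^sup>2" by (simp add: power_mult_distrib)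
  hence "u * Ev \<le> v * Eu" using assms Eu0 Ev0 by (simp add: power2_le_iff_abs_le)
  hence q: "u / Eu \<le> v / Ev" using Eu0 Ev0 by (simp add: divide_simps mult.commute)
  have q0: "u / Eu > 0" using assms Eu0 by simp
  have "u / Eu * tanh (Eu / (2*T)) < v / Ev * tanh (Ev / (2*T))"
    using q q0 t t0 by (smt (verit) mult_less_cancel_left_pos mult_right_mono)
  thus ?thesis unfolding phi_def Eu_def[symmetric] Ev_def[symmetric] by simp
qed

lemma phi_cont:
  assumes "u > 0" "T > 0"
  shows "continuous_on S (phi T u)"
proof -
  have "\<And>\<xi>. sqrt (\<xi>\<^sup>2 + u\<^sup>2) \<noteq> 0" using assms by (simp add: add_nonneg_pos)
  thus ?thesis unfolding phi_def
    using assms by (intro continuous_intros) auto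
qed

lemma log_part:
  assumes "u > 0" "T > 0" "a \<le> b"
  shows "2 * T * ln (cosh (sqrt (b\<^sup>2 + u\<^sup>2) / (2 * T)) / cosh (sqrt (a\<^sup>2 + u\<^sup>2) / (2 * T)))
     = integral {a..b} (\<lambda>\<xi>. \<xi> * tanh (sqrt (\<xi>\<^sup>2 + u\<^sup>2) / (2 * T)) / sqrt (\<xi>\<^sup>2 + u\<^sup>2))"
proof -
  define F where "F \<xi> = 2 * T * ln (cosh (sqrt (\<xi>\<^sup>2 + u\<^sup>2) / (2 * T)))" for \<xi>
  have pos: "\<And>\<xi>. \<xi>\<^sup>2 + u\<^sup>2 > 0" using assms by (simp add: add_nonneg_pos)
  have "(F has_real_derivative \<xi> * tanh (sqrt (\<xi>\<^sup>2 + u\<^sup>2) / (2 * T)) / sqrt (\<xi>\<^sup>2 + u\<^sup>2)) (at \<xi> within {a..b})" for \<xi>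
    unfolding F_def
    using pos[of \<xi>] assms
    by (auto intro!: derivative_eq_intros simp: tanh_def field_simps power2_eq_square)
  hence "((\<lambda>\<xi>. \<xi> * tanh (sqrt (\<xi>\<^sup>2 + u\<^sup>2) / (2 * T)) / sqrt (\<xi>\<^sup>2 + u\<^sup>2)) has_integral (F b - F a)) {a..b}"
    using assms by (intro fundamental_theorem_of_calculus) (auto simp: has_real_derivative_iff_has_vector_derivative[symmetric])
  moreover have "F b - F a = 2 * T * ln (cosh (sqrt (b\<^sup>2 + u\<^sup>2) / (2 * T)) / cosh (sqrt (a\<^sup>2 + u\<^sup>2) / (2 * T)))"
    unfolding F_def by (simp add: ln_div right_diff_distrib)
  ultimately show ?thesis by (simp add: integral_unique)
qed


lemma rep:
  assumes "u > 0" "T > 0" "\<mu> \<le> \<xi>m"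
  shows "u * gap_f \<xi>m \<mu> T u = integral {\<mu>..\<xi>m} (\<lambda>\<xi>. \<xi> * phi T u \<xi>) + \<mu> * integral {0..\<mu>} (phi T u)"
proof -
  have e1: "(\<lambda>\<xi>. \<xi> * phi T u \<xi>) = (\<lambda>\<xi>. u * (\<xi> * tanh (sqrt (\<xi>\<^sup>2 + u\<^sup>2) / (2 * T)) / sqrt (\<xi>\<^sup>2 + u\<^sup>2)))"
    by (auto simp: phi_def)
  have e2: "phi T u = (\<lambda>\<xi>. u * (tanh (sqrt (\<xi>\<^sup>2 + u\<^sup>2) / (2 * T)) / sqrt (\<xi>\<^sup>2 + u\<^sup>2)))"
    by (auto simp: phi_def)
  have i1: "integral {\<mu>..\<xi>m} (\<lambda>\<xi>. \<xi> * phi T u \<xi>) = u * integral {\<mu>..\<xi>m} (\<lambda>\<xi>. \<xi> * tanh (sqrt (\<xi>\<^sup>2 + u\<^sup>2) / (2 * T)) / sqrt (\<xi>\<^sup>2 + u\<^sup>2))"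
    unfolding e1 by (rule integral_mult_right)
  have i2: "integral {0..\<mu>} (phi T u) = u * integral {0..\<mu>} (\<lambda>\<xi>. tanh (sqrt (\<xi>\<^sup>2 + u\<^sup>2) / (2 * T)) / sqrt (\<xi>\<^sup>2 + u\<^sup>2))"
    unfolding e2 by (rule integral_mult_right)
  show ?thesis unfolding gap_f_def log_part[OF assms] i1 i2
    by (simp add: algebra_simps)
qed

theorem mainTheorem5:
  fixes \<xi>m \<mu> T :: real
  assumes "\<xi>m > 0" and "0 \<le> \<mu>" and "\<mu> \<le> \<xi>m" and "T > 0"
  shows "strict_mono_on {0<..} (\<lambda>u. u * gap_f \<xi>m \<mu> T u)"
proof (rule strict_mono_onI)
  fix u v :: real assume uv: "u \<in> {0<..}" "v \<in> {0<..}" "u < v"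
  hence u0: "u > 0" and v0: "v > 0" by auto
  have cu: "continuous_on S (phi T u)" "continuous_on S (\<lambda>\<xi>. \<xi> * phi T u \<xi>)" for S
    using phi_cont[OF u0 assms(4)] by (auto intro!: continuous_intros)
  have cv: "continuous_on S (phi T v)" "continuous_on S (\<lambda>\<xi>. \<xi> * phi T v \<xi>)" for S
    using phi_cont[OF v0 assms(4)] by (auto intro!: continuous_intros)
  have lt: "phi T u \<xi> < phi T v \<xi>" for \<xi> using phi_mono[OF u0 uv(3) assms(4)] .
  have I2: "integral {0..\<mu>} (phi T u) \<le> integral {0..\<mu>} (phi T v)"
    by (rule integral_le) (auto intro: integrable_continuous_real cu cv less_imp_le lt)
  show "u * gap_f \<xi>m \<mu> T u < v * gap_f \<xi>m \<mu> T v"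
    unfolding rep[OF u0 assms(4,3)] rep[OF v0 assms(4,3)]
  proof (cases "\<mu> < \<xi>m")
    case True
    have "integral {\<mu>..\<xi>m} (\<lambda>\<xi>. \<xi> * phi T u \<xi>) < integral {\<mu>..\<xi>m} (\<lambda>\<xi>. \<xi> * phi T v \<xi>)"
    proof (rule integral_less_real[OF cu(2) cv(2)])
      show "{\<mu><..<\<xi>m} \<noteq> {}" using True by auto
      fix x assume "x \<in> {\<mu><..<\<xi>m}"
      hence "x > 0" using assms by auto
      thus "x * phi T u x < x * phi T v x" using lt by simp
    qed
    moreover have "\<mu> * integral {0..\<mu>} (phi T u) \<le> \<mu> * integral {0..\<mu>} (phi T v)"
      using I2 assms by (simp add: mult_left_mono)
    ultimately show "integral {\<mu>..\<xi>m} (\<lambda>\<xi>. \<xi> * phi T u \<xi>) + \<mu> * integral {0..\<mu>} (phi T u)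
      < integral {\<mu>..\<xi>m} (\<lambda>\<xi>. \<xi> * phi T v \<xi>) + \<mu> * integral {0..\<mu>} (phi T v)" by linarith
  next
    case False
    hence m: "\<mu> = \<xi>m" using assms by auto
    have "integral {0..\<mu>} (phi T u) < integral {0..\<mu>} (phi T v)"
      by (rule integral_less_real[OF cu(1) cv(1)]) (use m assms lt in auto)
    hence "\<mu> * integral {0..\<mu>} (phi T u) < \<mu> * integral {0..\<mu>} (phi T v)"
      using m assms by simp
    thus "integral {\<mu>..\<xi>m} (\<lambda>\<xi>. \<xi> * phi T u \<xi>) + \<mu> * integral {0..\<mu>} (phi T u)
      < integral {\<mu>..\<xi>m} (\<lambda>\<xi>. \<xi> * phi T v \<xi>) + \<mu> * integral {0..\<mu>} (phi T v)"
      using m by simp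
  qed
qed

end
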